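(* Let $i,j\in\mathbb Z^{\geq 0}$. Then for all $n\in\mathbb N$: (i) $f_{i,j}(n)+1=f_{i,j-1}(n)$; (ii) $f_{i+1,j}(n)+1=f_{i+1,j-1}(n)$; (iii) $f_{i,0}(a(n))+1=f_{i+1,F(i+1)-1}(n)$; (iv) $f_{i,0}(b(n))+1=f_{i,F(i+2)-1}(b(n)+1)$; (v) $f_{i+1,0}(n)+1=f_{i,F(i+2)-1}(a(n)+1)$.
   Context: $\mathbb N=\{1,2,\dots\}$, $\varphi=\frac{1+\sqrt5}{2}$, $a(n)=\lfloor n\varphi\rfloor$, $b(n)=\lfloor n\varphi^2\rfloor$. $F$ is the Fibonacci sequence with $F(0)=0$, $F(1)=F(2)=1$, $F(n)=F(n-1)+F(n-2)$. For $i\in\mathbb Z^{\geq 0}$, $j\in\mathbb Z$, $f_{i,j}(n)=F(i+1)a(n)+F(i)n-j$ for $n\in\mathbb N$. *)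

theory Defs
  imports Complex_Main
begin

definition phi :: real where "phi = (1 + sqrt 5) / 2"

definition a :: "nat \<Rightarrow> nat" where "a n = nat \<lfloor>real n * phi\<rfloor>"
definition b :: "nat \<Rightarrow> nat" where "b n = nat \<lfloor>real n * phi ^ 2\<rfloor>"

fun F :: "nat \<Rightarrow> int" where
  "F 0 = 0" | "F (Suc 0) = 1" | "F (Suc (Suc n)) = F (Suc n) + F n"

definition f :: "nat \<Rightarrow> int \<Rightarrow> nat \<Rightarrow> int" where
  "f i j n = F (i + 1) * int (a n) + F i * int n - j"

end

theory Submission
  imports Defs
begin

lemma sq5: "5 * n^2 = (m::nat)^2 \<Longrightarrow> n = 0"
proof (induction n arbitrary: m rule: less_induct)
  case (less n)
  have "5 dvd m"
  proof -
    have "m mod 5 < 5" by simp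
    then have "m mod 5 = 0 \<or> m mod 5 = 1 \<or> m mod 5 = 2 \<or> m mod 5 = 3 \<or> m mod 5 = 4" by linarith
    moreover have "m^2 mod 5 = ((m mod 5)^2) mod 5" by (simp add: power_mod)
    moreover have "m^2 mod 5 = 0" using less.prems by (metis mod_mult_self1_is_0)
    ultimately show ?thesis by auto
  qed
  then obtain k where k: "m = 5*k" by auto
  then have "n^2 = 5 * k^2" using less.prems by (simp add: power_mult_distrib)
  have "5 dvd n"
  proof -
    have "n mod 5 < 5" by simp
    then have "n mod 5 = 0 \<or> n mod 5 = 1 \<or> n mod 5 = 2 \<or> n mod 5 = 3 \<or> n mod 5 = 4" by linarith
    moreover have "n^2 mod 5 = ((n mod 5)^2) mod 5" by (simp add: power_mod)
    moreover have "n^2 mod 5 = 0" using \<open>n^2 = 5 * k^2\<close> by simp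
    ultimately show ?thesis by auto
  qed
  then obtain l where l: "n = 5*l" by auto
  have "5 * l^2 = k^2" using \<open>n^2 = 5 * k^2\<close> l by (simp add: power_mult_distrib)
  show ?case
  proof (rule ccontr)
    assume "n \<noteq> 0"
    then have "l < n" using l by simp
    then have "l = 0" using less.IH \<open>5 * l^2 = k^2\<close> by blast
    then show False using l \<open>n \<noteq> 0\<close> by simp
  qed
qed

lemma phi_sq: "phi^2 = phi + 1"
  unfolding phi_def by (simp add: power2_eq_square field_simps)

lemma phi_bounds: "1 < phi" "phi < 2"
proof -
  have "2 < sqrt 5" by (rule real_less_rsqrt) simp
  moreover have "sqrt 5 < 3" by (rule real_sqrt_less_mono[of 5 9, simplified]) 
  ultimately show "1 < phi" "phi < 2" unfolding phi_def by auto
qed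

lemma a_int: "int (a m) = \<lfloor>real m * phi\<rfloor>"
  unfolding a_def using phi_bounds by simp

lemma not_int: assumes "n \<ge> 1" shows "real n * phi \<noteq> of_int k"
proof
  assume h: "real n * phi = of_int k"
  have "real n * sqrt 5 = of_int (2*k - int n)" using h unfolding phi_def by (simp add: field_simps)
  then have "(real n * sqrt 5)^2 = (of_int (2*k - int n))^2" by simp
  then have "5 * (real n)^2 = real_of_int ((2*k - int n)^2)" by (simp add: power_mult_distrib)
  then have "5 * int n^2 = (2*k - int n)^2" by (metis of_int_eq_iff of_int_of_nat_eq of_int_mult of_int_numeral of_int_power)
  then have "int (5 * n^2) = int (nat \<bar>2*k - int n\<bar> ^2)" by simp
  then have "5 * n^2 = (nat \<bar>2*k - int n\<bar>)^2" using of_nat_eq_iff by blast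
  then have "n = 0" by (rule sq5)
  then show False using assms by simp
qed


lemma floor_shift: "\<lfloor>of_int k + y\<rfloor> = k + \<lfloor>y::real\<rfloor>"
  by (metis add.commute floor_add_int)

lemma key:
  assumes "n \<ge> 1"
  shows "int (b n) = int (a n) + int n"
    and "int (a (a n)) = int (a n) + int n - 1"
    and "int (a (b n + 1)) = int (a (b n)) + 1"
    and "int (a (a n + 1)) = int (a n) + int n + 1"
proof -
  define A where "A = \<lfloor>real n * phi\<rfloor>"
  define x where "x = real n * phi - of_int A"
  have x0: "0 < x"
    using not_int[OF assms, of A] of_int_floor_le[of "real n * phi"] unfolding x_def A_def by linarith
  have x1: "x < 1" unfolding x_def A_def by linarith
  have aA: "int (a n) = A" using a_int A_def by simp
  have p1: "1 < phi" "phi < 2" by (rule phi_bounds)+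
  have ps: "phi * phi = phi + 1" using phi_sq by (simp add: power2_eq_square)
  have pn: "phi * (phi * y) = y + phi * y" for y
  proof -
    have "phi * (phi * y) = (phi * phi) * y" by simp
    then show ?thesis using ps by (simp add: distrib_right)
  qed
  have h: "real n * phi * phi = real n * phi + real n" using pn[of "real n"] by (simp add: mult.commute)
  have q: "0 < (phi-1)*(1-x)" "0 < (2-phi)*(1-x)" "0 < (2-phi)*x" "0 < (phi-1)*x"
    using x0 x1 p1 by auto
  have bI: "int (b n) = A + int n"
  proof -
    have "real n * phi^2 = of_int (A + int n) + x" unfolding x_def using phi_sq by (simp add: algebra_simps)
    then have "\<lfloor>real n * phi^2\<rfloor> = A + int n" using x0 x1 floor_shift[of "A + int n" x]
      by (simp add: floor_eq_iff)
    moreover have "real n * phi^2 \<ge> 0" by simp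
    moreover have "A \<ge> 0" unfolding A_def using p1 by simp
    ultimately show ?thesis unfolding b_def by simp
  qed
  then show "int (b n) = int (a n) + int n" using aA by simp
  have aa: "real (a n) = real n * phi - x" proof -
    have "real (a n) = real_of_int (int (a n))" by simp
    then show ?thesis using aA x_def by simp
  qed
  have "real (a n) * phi = (real n * phi - x) * phi" using aa by simp
  also have "\<dots> = of_int (A + int n - 1) + (1 - x * (phi - 1))"
    using h unfolding x_def by (simp add: algebra_simps)
  finally have e1: "real (a n) * phi = of_int (A + int n - 1) + (1 - x * (phi - 1))" .
  have "\<lfloor>real (a n) * phi\<rfloor> = A + int n - 1"
    unfolding e1 floor_shift using q x0 x1 p1 mult_strict_mono[of x 1 "phi - 1" 1]
    by (simp add: floor_eq_iff mult_pos_pos)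
  then show "int (a (a n)) = int (a n) + int n - 1" using a_int aA by simp
  have "real (a n + 1) * phi = of_int (A + int n + 1) + (phi - 1 - x * (phi - 1))"
    using e1 by (simp add: algebra_simps)
  moreover have "0 \<le> phi - 1 - x * (phi - 1)" "phi - 1 - x * (phi - 1) < 1"
    using q x0 x1 p1 mult_strict_mono[of x 1 "phi - 1" 1] by (auto simp: mult_pos_pos algebra_simps)
  ultimately have "\<lfloor>real (a n + 1) * phi\<rfloor> = A + int n + 1"
    by (simp only: floor_shift) (simp add: floor_eq_iff)
  then show "int (a (a n + 1)) = int (a n) + int n + 1" using a_int[of "a n + 1"] aA by simp
  have bb: "real (b n) = real n * phi - x + real n" using bI aa aA by (metis of_int_of_nat_eq of_nat_add)
  have "real (b n) * phi = of_int (A + (A + int n)) + x * (2 - phi)"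
    using h unfolding bb x_def by (simp add: algebra_simps)
  moreover have "0 \<le> x * (2 - phi)" "x * (2 - phi) < 1"
    using q x0 x1 p1 mult_strict_mono[of x 1 "2 - phi" 1] by (auto simp: mult_pos_pos algebra_simps)
  ultimately have f1: "\<lfloor>real (b n) * phi\<rfloor> = A + (A + int n)"
    by (simp only: floor_shift) (simp add: floor_eq_iff)
  have "real (b n + 1) * phi = of_int (A + (A + int n) + 1) + (x * (2 - phi) + phi - 1)"
    using \<open>real (b n) * phi = _\<close> by (simp add: algebra_simps)
  moreover have "0 \<le> x * (2 - phi) + phi - 1" "x * (2 - phi) + phi - 1 < 1"
    using q x0 x1 p1 mult_strict_mono[of x 1 "2 - phi" 1] by (auto simp: mult_pos_pos algebra_simps)
  ultimately have f2: "\<lfloor>real (b n + 1) * phi\<rfloor> = A + (A + int n) + 1"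
    by (simp only: floor_shift) (simp add: floor_eq_iff)
  show "int (a (b n + 1)) = int (a (b n)) + 1"
    using f1 f2 a_int[of "b n"] a_int[of "b n + 1"] by simp
qed

theorem proposition3p5:
  fixes i :: nat and j :: int and n :: nat
  assumes "j \<ge> 0" and "n \<ge> 1"
  shows "f i j n + 1 = f i (j - 1) n
    \<and> f (i + 1) j n + 1 = f (i + 1) (j - 1) n
    \<and> f i 0 (a n) + 1 = f (i + 1) (F (i + 1) - 1) n
    \<and> f i 0 (b n) + 1 = f i (F (i + 2) - 1) (b n + 1)
    \<and> f (i + 1) 0 n + 1 = f i (F (i + 2) - 1) (a n + 1)"
proof -
  have F2: "F (i + 2) = F (i + 1) + F i" by (simp add: numeral_2_eq_2)
  note k = key[OF assms(2)]
  show ?thesis unfolding f_def F2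
    by (simp only: of_nat_add of_nat_1 k) (simp add: algebra_simps)
qed

end
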